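(* Let $E$ be a graph and $X\subseteq{\rm Reg}(E)$. Then $D(\partial_X(E))\delta_0=\{a\delta_0:a\in D(\partial_X(E))\}$ is a maximal commutative subring of $D(\partial_X(E))\rtimes_\alpha\mathbb F$ (i.e., every element of $D(\partial_X(E))\rtimes_\alpha\mathbb F$ commuting with all of $D(\partial_X(E))\delta_0$ lies in $D(\partial_X(E))\delta_0$) if and only if $E$ satisfies Relative Condition (L).
   Context: Let $K$ be a field and $E=(E^0,E^1,r,s)$ a directed graph. A vertex $v$ is a sink if $s^{-1}(v)=\emptyset$, regular if $s^{-1}(v)$ is finite and nonempty; ${\rm Reg}(E)$ is the set of regular vertices; $Y={\rm Reg}(E)\setminus X$. Finite paths are $\xi_1\cdots\xi_n$ with $r(\xi_i)=s(\xi_{i+1})$, vertices being paths of length $0$; $E^\infty$ is the set of infinite paths. A cycle is a path $e_1\cdots e_n$ ($n\ge1$) with $r(e_n)=s(e_1)$ and $s(e_i)\ne s(e_j)$ for $i\neq j$; an exit is an edge $e$ with $s(e)=s(e_i)$ for some $i$ and $e\ne e_i$. $E$ satisfies Relative Condition (L) if every cycle $e_1\cdots e_n$ with $s(e_i)\notin Y$ for all $i$ has an exit. The relative boundary path space is $\partial_X(E)=E^\infty\cup\{\xi \text{ finite path}: r(\xi)\text{ is a sink}\}\cup\{\xi\text{ finite path}: r(\xi)\in Y\}$. Let $\mathbb F$ be the free group on $E^1$ with identity $0$, and $W$ the set of finite paths of length $\ge1$, viewed in $\mathbb F$. Define subsets of $\partial_X(E)$: $U_0=\partial_X(E)$; $U_{b^{-1}}=\{\xi: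 s(\xi)=r(b)\}$ for $b\in W$; $U_a=\{\xi: \xi_1\cdots\xi_{|a|}=a\}$ for $a\in W$; $U_{ab^{-1}}=U_a$ for $a,b\in W$ with $r(a)=r(b)$ and $a_{|a|}\ne b_{|b|}$; $U_c=\emptyset$ for all other $c$; and $U_v=\{\xi: s(\xi)=v\}$ for $v\in E^0$. Maps $\theta_c:U_{c^{-1}}\to U_c$: $\theta_0={\rm id}$; $\theta_b(\xi)=b\xi$ for $b\in W$; $\theta_{b^{-1}}$ deletes the initial segment $b$ (sending $b$ to $r(b)$); $\theta_{ab^{-1}}$ deletes the initial segment $b$ and prepends $a$. Let $1_c$, $1_v$ be the characteristic functions of $U_c$, $U_v$ (functions $\partial_X(E)\to K$). Put $D_0=D(\partial_X(E))={\rm span}_K(\{1_p:p\ne0\}\cup\{1_v:v\in E^0\})$ and $D_p={\rm span}_K\{1_p1_q:q\in\mathbb F\}$ for $p\neq0$; $\alpha_p:D_{p^{-1}}\to D_p$, $\alpha_p(f)=f\circ\theta_{p^{-1}}$ on $U_p$ and $0$ elsewhere. $D(\partial_X(E))\rtimes_\alpha\mathbb F$ is the set of finite sums $\sum a_t\delta_t$, $a_t\in D_t$, with multiplication $(a_t\delta_t)(b_s\delta_s)=\alpha_t(\alpha_{t^{-1}}(a_t)b_s)\delta_{ts}$. *)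

theory Defs
  imports Main
begin

record ('v, 'e) graph =
  verts :: "'v set"
  edges :: "'e set"
  rng   :: "'e \<Rightarrow> 'v"
  src   :: "'e \<Rightarrow> 'v"

definition wf_graph :: "('v, 'e) graph \<Rightarrow> bool" where
  "wf_graph G \<longleftrightarrow> (\<forall>e\<in>edges G. src G e \<in> verts G \<and> rng G e \<in> verts G)"

definition is_sink :: "('v, 'e) graph \<Rightarrow> 'v \<Rightarrow> bool" where
  "is_sink G v \<longleftrightarrow> v \<in> verts G \<and> {e \<in> edges G. src G e = v} = {}"

definition is_regular :: "('v, 'e) graph \<Rightarrow> 'v \<Rightarrow> bool" where
  "is_regular G v \<longleftrightarrow> v \<in> verts G \<and> finite {e \<in> edges G. src G e = v}
                      \<and> {e \<in> edges G. src G e = v} \<noteq> {}"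

definition Reg :: "('v, 'e) graph \<Rightarrow> 'v set" where
  "Reg G = {v. is_regular G v}"

definition is_fpath :: "('v, 'e) graph \<Rightarrow> 'e list \<Rightarrow> bool" where
  "is_fpath G es \<longleftrightarrow> es \<noteq> [] \<and> set es \<subseteq> edges G
     \<and> (\<forall>i. Suc i < length es \<longrightarrow> rng G (es ! i) = src G (es ! Suc i))"

definition is_ipath :: "('v, 'e) graph \<Rightarrow> (nat \<Rightarrow> 'e) \<Rightarrow> bool" where
  "is_ipath G f \<longleftrightarrow> (\<forall>i. f i \<in> edges G \<and> rng G (f i) = src G (f (Suc i)))"

text \<open>Cycles, exits and Relative Condition (L); Y = Reg(E) - X.\<close>
definition is_cycle :: "('v, 'e) graph \<Rightarrow> 'e list \<Rightarrow> bool" where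
  "is_cycle G es \<longleftrightarrow> is_fpath G es \<and> rng G (last es) = src G (hd es)
     \<and> distinct (map (src G) es)"

definition has_exit :: "('v, 'e) graph \<Rightarrow> 'e list \<Rightarrow> bool" where
  "has_exit G es \<longleftrightarrow> (\<exists>e\<in>edges G. \<exists>i<length es. src G e = src G (es ! i) \<and> e \<noteq> es ! i)"

definition rel_condition_L :: "('v, 'e) graph \<Rightarrow> 'v set \<Rightarrow> bool" where
  "rel_condition_L G X \<longleftrightarrow>
     (\<forall>es. is_cycle G es \<and> (\<forall>i<length es. src G (es ! i) \<notin> Reg G - X) \<longrightarrow> has_exit G es)"

text \<open>Paths: a vertex (length 0), a finite path of length \<ge> 1, or an infinite path.\<close>
datatype ('v, 'e) bpath = BV 'v | BF "'e list" | BI "nat \<Rightarrow> 'e"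

fun bsrc :: "('v, 'e) graph \<Rightarrow> ('v, 'e) bpath \<Rightarrow> 'v" where
  "bsrc G (BV v) = v"
| "bsrc G (BF es) = src G (hd es)"
| "bsrc G (BI f) = src G (f 0)"

definition bdry :: "('v, 'e) graph \<Rightarrow> 'v set \<Rightarrow> ('v, 'e) bpath set" where
  "bdry G X =
     {BI f | f. is_ipath G f}
   \<union> {BV v | v. v \<in> verts G \<and> (is_sink G v \<or> v \<in> Reg G - X)}
   \<union> {BF es | es. is_fpath G es \<and> (is_sink G (rng G (last es)) \<or> rng G (last es) \<in> Reg G - X)}"

fun has_prefix :: "'e list \<Rightarrow> ('v, 'e) bpath \<Rightarrow> bool" where
  "has_prefix a (BV v) \<longleftrightarrow> a = []"
| "has_prefix a (BF es) \<longleftrightarrow> length a \<le> length es \<and> take (length a) es = a"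
| "has_prefix a (BI f) \<longleftrightarrow> (\<forall>i<length a. f i = a ! i)"

text \<open>Delete the initial segment of length n (a full finite path b becomes r(b)).\<close>
fun drop_pre :: "('v, 'e) graph \<Rightarrow> nat \<Rightarrow> ('v, 'e) bpath \<Rightarrow> ('v, 'e) bpath" where
  "drop_pre G n (BV v) = BV v"
| "drop_pre G n (BF es) =
     (if n < length es then BF (drop n es)
      else if n = length es then BV (rng G (last es)) else BF es)"
| "drop_pre G n (BI f) = BI (\<lambda>i. f (i + n))"

fun prepend :: "'e list \<Rightarrow> ('v, 'e) bpath \<Rightarrow> ('v, 'e) bpath" where
  "prepend a (BV v) = (if a = [] then BV v else BF a)"
| "prepend a (BF es) = BF (a @ es)"
| "prepend a (BI f) = BI (\<lambda>i. if i < length a then a ! i else f (i - length a))"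

text \<open>A letter (e, False) is the generator e, (e, True) is its inverse.\<close>
type_synonym 'e fword = "('e \<times> bool) list"

definition reduced :: "'e fword \<Rightarrow> bool" where
  "reduced w \<longleftrightarrow> (\<forall>i. Suc i < length w \<longrightarrow>
      \<not> (fst (w ! i) = fst (w ! Suc i) \<and> snd (w ! i) \<noteq> snd (w ! Suc i)))"

definition red_step :: "('e \<times> bool) \<Rightarrow> 'e fword \<Rightarrow> 'e fword" where
  "red_step x acc = (case acc of [] \<Rightarrow> [x]
     | y # ys \<Rightarrow> (if fst x = fst y \<and> snd x \<noteq> snd y then ys else x # acc))"

definition reduce :: "'e fword \<Rightarrow> 'e fword" where
  "reduce w = foldr red_step w []"

definition fmul :: "'e fword \<Rightarrow> 'e fword \<Rightarrow> 'e fword" where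
  "fmul u v = reduce (u @ v)"

definition finv :: "'e fword \<Rightarrow> 'e fword" where
  "finv u = rev (map (\<lambda>(e, b). (e, \<not> b)) u)"

text \<open>The free group F on E^1; its identity (denoted 0 in the paper) is the empty word.\<close>
definition FG :: "('v, 'e) graph \<Rightarrow> 'e fword set" where
  "FG G = {w. reduced w \<and> fst ` set w \<subseteq> edges G}"

text \<open>Decomposition of a word c as a b^{-1} with a, b positive words (when possible).\<close>
definition pos_part :: "'e fword \<Rightarrow> 'e list" where
  "pos_part c = map fst (takeWhile (\<lambda>x. \<not> snd x) c)"

definition neg_part :: "'e fword \<Rightarrow> 'e list" where
  "neg_part c = rev (map fst (dropWhile (\<lambda>x. \<not> snd x) c))"

definition is_ab_inv :: "'e fword \<Rightarrow> bool" where
  "is_ab_inv c \<longleftrightarrow> (\<forall>x\<in>set (dropWhile (\<lambda>x. \<not> snd x) c). snd x)"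

definition U :: "('v, 'e) graph \<Rightarrow> 'v set \<Rightarrow> 'e fword \<Rightarrow> ('v, 'e) bpath set" where
  "U G X c =
    (let a = pos_part c; b = neg_part c in
     if is_ab_inv c then
       (if a = [] \<and> b = [] then bdry G X
        else if a = [] then
          (if is_fpath G b then {\<xi> \<in> bdry G X. bsrc G \<xi> = rng G (last b)} else {})
        else if b = [] then
          (if is_fpath G a then {\<xi> \<in> bdry G X. has_prefix a \<xi>} else {})
        else if is_fpath G a \<and> is_fpath G b \<and> rng G (last a) = rng G (last b)
                \<and> last a \<noteq> last b
          then {\<xi> \<in> bdry G X. has_prefix a \<xi>} else {})
     else {})"

definition Uv :: "('v, 'e) graph \<Rightarrow> 'v set \<Rightarrow> 'v \<Rightarrow> ('v, 'e) bpath set" where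
  "Uv G X v = {\<xi> \<in> bdry G X. bsrc G \<xi> = v}"

definition theta :: "('v, 'e) graph \<Rightarrow> 'e fword \<Rightarrow> ('v, 'e) bpath \<Rightarrow> ('v, 'e) bpath" where
  "theta G c \<xi> = prepend (pos_part c) (drop_pre G (length (neg_part c)) \<xi>)"

definition ind :: "('v, 'e) graph \<Rightarrow> 'v set \<Rightarrow> 'e fword \<Rightarrow> ('v, 'e) bpath \<Rightarrow> 'k::field" where
  "ind G X c \<xi> = (if \<xi> \<in> U G X c then 1 else 0)"

definition indv :: "('v, 'e) graph \<Rightarrow> 'v set \<Rightarrow> 'v \<Rightarrow> ('v, 'e) bpath \<Rightarrow> 'k::field" where
  "indv G X v \<xi> = (if \<xi> \<in> Uv G X v then 1 else 0)"

definition lspan :: "('a \<Rightarrow> 'k::field) set \<Rightarrow> ('a \<Rightarrow> 'k) set" where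
  "lspan S = {f. \<exists>T c. finite T \<and> T \<subseteq> S \<and> f = (\<lambda>x. \<Sum>g\<in>T. c g * g x)}"

definition D0 :: "('v, 'e) graph \<Rightarrow> 'v set \<Rightarrow> (('v, 'e) bpath \<Rightarrow> 'k::field) set" where
  "D0 G X = lspan ({ind G X p | p. p \<in> FG G \<and> p \<noteq> []} \<union> {indv G X v | v. v \<in> verts G})"

definition Dp :: "('v, 'e) graph \<Rightarrow> 'v set \<Rightarrow> 'e fword \<Rightarrow> (('v, 'e) bpath \<Rightarrow> 'k::field) set" where
  "Dp G X p = (if p = [] then D0 G X
               else lspan {(\<lambda>\<xi>. ind G X p \<xi> * ind G X q \<xi>) | q. q \<in> FG G})"

definition alpha :: "('v, 'e) graph \<Rightarrow> 'v set \<Rightarrow> 'e fword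
    \<Rightarrow> (('v, 'e) bpath \<Rightarrow> 'k::field) \<Rightarrow> ('v, 'e) bpath \<Rightarrow> 'k" where
  "alpha G X p f \<xi> = (if \<xi> \<in> U G X p then f (theta G (finv p) \<xi>) else 0)"

text \<open>An element \<Sum> a_t \<delta>_t is represented by the finitely supported coefficient map t \<mapsto> a_t.\<close>
definition CP :: "('v, 'e) graph \<Rightarrow> 'v set \<Rightarrow> ('e fword \<Rightarrow> ('v, 'e) bpath \<Rightarrow> 'k::field) set" where
  "CP G X = {x. (\<forall>t. if t \<in> FG G then x t \<in> Dp G X t else x t = (\<lambda>_. 0))
              \<and> finite {t. x t \<noteq> (\<lambda>_. 0)}}"

definition cp_mult :: "('v, 'e) graph \<Rightarrow> 'v set
    \<Rightarrow> ('e fword \<Rightarrow> ('v, 'e) bpath \<Rightarrow> 'k::field)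
    \<Rightarrow> ('e fword \<Rightarrow> ('v, 'e) bpath \<Rightarrow> 'k)
    \<Rightarrow> ('e fword \<Rightarrow> ('v, 'e) bpath \<Rightarrow> 'k)" where
  "cp_mult G X x y g \<xi> =
     (\<Sum>t\<in>{t. x t \<noteq> (\<lambda>_. 0)}. \<Sum>u\<in>{u. y u \<noteq> (\<lambda>_. 0)}.
        if fmul t u = g
        then alpha G X t (\<lambda>\<zeta>. alpha G X (finv t) (x t) \<zeta> * y u \<zeta>) \<xi>
        else 0)"

definition delta0 :: "(('v, 'e) bpath \<Rightarrow> 'k::field) \<Rightarrow> 'e fword \<Rightarrow> ('v, 'e) bpath \<Rightarrow> 'k" where
  "delta0 a t = (if t = [] then a else (\<lambda>_. 0))"

end

theory Submission
  imports Defs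
begin

section \<open>Words\<close>

definition Wp :: "'e list \<Rightarrow> 'e fword" where "Wp a = map (\<lambda>e. (e, False)) a"
definition Wn :: "'e list \<Rightarrow> 'e fword" where "Wn b = map (\<lambda>e. (e, True)) (rev b)"

lemma dropWhile_Wn: "dropWhile (\<lambda>x. \<not> snd x) (Wn b) = Wn b"
  by (cases "rev b") (auto simp: Wn_def)

lemma takeWhile_Wn: "takeWhile (\<lambda>x. \<not> snd x) (Wn b) = []"
  by (cases "rev b") (auto simp: Wn_def)

lemma takeWhile_Wp: "takeWhile (\<lambda>x. \<not> snd x) (Wp a @ ys) = Wp a @ takeWhile (\<lambda>x. \<not> snd x) ys"
  by (induction a) (auto simp: Wp_def)
lemma dropWhile_Wp: "dropWhile (\<lambda>x. \<not> snd x) (Wp a @ ys) = dropWhile (\<lambda>x. \<not> snd x) ys"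
  by (induction a) (auto simp: Wp_def)

lemma pos_part_WW[simp]: "pos_part (Wp a @ Wn b) = a"
  unfolding pos_part_def takeWhile_Wp takeWhile_Wn by (simp add: Wp_def comp_def)

lemma neg_part_WW[simp]: "neg_part (Wp a @ Wn b) = b"
  unfolding neg_part_def dropWhile_Wp dropWhile_Wn by (simp add: Wn_def comp_def rev_map)

lemma is_ab_inv_WW[simp]: "is_ab_inv (Wp a @ Wn b)"
  unfolding is_ab_inv_def dropWhile_Wp dropWhile_Wn by (simp add: Wn_def)

lemma Wn_Nil[simp]: "Wn [] = []" and Wp_Nil[simp]: "Wp [] = []"
  by (simp_all add: Wn_def Wp_def)

lemma tw_decomp: "map (\<lambda>e. (e, False)) (map fst (takeWhile (\<lambda>x. \<not> snd x) t)) = takeWhile (\<lambda>x. \<not> snd x) t"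
  by (induction t) auto
lemma dw_decomp: "(\<forall>x\<in>set l. snd x) \<Longrightarrow> map (\<lambda>e. (e, True)) (map fst l) = l"
  by (induction l) auto

lemma ab_decomp:
  assumes "is_ab_inv t"
  shows "t = Wp (pos_part t) @ Wn (neg_part t)"
proof -
  have 1: "Wp (pos_part t) = takeWhile (\<lambda>x. \<not> snd x) t"
    unfolding Wp_def pos_part_def by (rule tw_decomp)
  have 2: "Wn (neg_part t) = dropWhile (\<lambda>x. \<not> snd x) t"
    unfolding Wn_def neg_part_def rev_rev_ident
    using assms unfolding is_ab_inv_def by (rule dw_decomp)
  show ?thesis unfolding 1 2 by simp
qed

lemma finv_WW[simp]: "finv (Wp a @ Wn b) = Wp b @ Wn a"
  by (simp add: finv_def Wp_def Wn_def rev_map comp_def)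

lemma ab_Nil: assumes "is_ab_inv t" "pos_part t = []" "neg_part t = []" shows "t = []"
proof -
  have "t = Wp (pos_part t) @ Wn (neg_part t)" by (rule ab_decomp) fact
  also have "\<dots> = []" unfolding assms(2,3) by simp
  finally show ?thesis .
qed

lemma Wp_FG: "set a \<subseteq> edges G \<Longrightarrow> Wp a \<in> FG G"
  by (auto simp: FG_def reduced_def Wp_def)

lemma Wp_ab[simp]: "pos_part (Wp a) = a" "neg_part (Wp a) = []" "is_ab_inv (Wp a)"
  using pos_part_WW[of a "[]"] neg_part_WW[of a "[]"] is_ab_inv_WW[of a "[]"] by simp_all

lemma Wn_ab[simp]: "pos_part (Wn b) = []" "neg_part (Wn b) = b" "is_ab_inv (Wn b)"
  using pos_part_WW[of "[]" b] neg_part_WW[of "[]" b] is_ab_inv_WW[of "[]" b] by simp_all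

lemma reduced_tl: assumes "reduced (x # w)" shows "reduced w"
  unfolding reduced_def
proof (intro allI impI)
  fix i assume "Suc i < length w"
  then show "\<not> (fst (w ! i) = fst (w ! Suc i) \<and> snd (w ! i) \<noteq> snd (w ! Suc i))"
    using assms[unfolded reduced_def, rule_format, of "Suc i"] by simp
qed

lemma reduce_id: "reduced w \<Longrightarrow> reduce w = w"
proof (induction w)
  case Nil show ?case by (simp add: reduce_def)
next
  case (Cons x w)
  have r: "reduce w = w" using Cons reduced_tl by blast
  have e: "reduce (x # w) = red_step x (reduce w)" by (simp add: reduce_def)
  show ?case
  proof (cases w)
    case Nil thus ?thesis using e r by (simp add: red_step_def)
  next
    case (Cons y ys)
    have "\<not> (fst x = fst y \<and> snd x \<noteq> snd y)"
      using \<open>reduced (x # w)\<close>[unfolded reduced_def, rule_format, of 0] Cons by simp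
    thus ?thesis using e r Cons by (simp add: red_step_def)
  qed
qed

lemma fmul_Nil_r: "t \<in> FG G \<Longrightarrow> fmul t [] = t"
  by (simp add: fmul_def FG_def reduce_id)
lemma fmul_Nil_l: "t \<in> FG G \<Longrightarrow> fmul [] t = t"
  by (simp add: fmul_def FG_def reduce_id)


section \<open>Paths\<close>

fun nth_edge :: "('v, 'e) bpath \<Rightarrow> nat \<Rightarrow> 'e option" where
  "nth_edge (BV v) i = None"
| "nth_edge (BF es) i = (if i < length es then Some (es ! i) else None)"
| "nth_edge (BI f) i = Some (f i)"

lemma has_prefix_nth: "has_prefix a \<xi> \<longleftrightarrow> (\<forall>i<length a. nth_edge \<xi> i = Some (a ! i))"
proof (cases \<xi>)
  case (BV v) then show ?thesis by (cases a) auto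
next
  case (BF es)
  show ?thesis
  proof
    assume "has_prefix a \<xi>"
    then have l: "length a \<le> length es" and t: "take (length a) es = a" using BF by auto
    show "\<forall>i<length a. nth_edge \<xi> i = Some (a ! i)"
    proof (intro allI impI)
      fix i assume i: "i < length a"
      have "es ! i = take (length a) es ! i" using i by simp
      then have "es ! i = a ! i" using t by simp
      then show "nth_edge \<xi> i = Some (a ! i)" using BF i l by simp
    qed
  next
    assume h: "\<forall>i<length a. nth_edge \<xi> i = Some (a ! i)"
    have l: "length a \<le> length es"
    proof (rule ccontr)
      assume "\<not> length a \<le> length es"
      then have "length es < length a" by simp
      with h BF show False by (auto dest!: spec[of _ "length es"])
    qed
    have "take (length a) es = a"
      by (rule nth_equalityI) (use l h BF in \<open>auto split: if_splits\<close>)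
    with l BF show "has_prefix a \<xi>" by simp
  qed
next
  case (BI f) then show ?thesis by simp
qed

lemma bdry_BV: "BV v \<in> bdry G X \<longleftrightarrow> v \<in> verts G \<and> (is_sink G v \<or> v \<in> Reg G - X)"
  by (auto simp: bdry_def)
lemma bdry_BF: "BF es \<in> bdry G X \<longleftrightarrow> is_fpath G es \<and> (is_sink G (rng G (last es)) \<or> rng G (last es) \<in> Reg G - X)"
  by (auto simp: bdry_def)
lemma bdry_BI: "BI f \<in> bdry G X \<longleftrightarrow> is_ipath G f"
  by (auto simp: bdry_def)

lemma E1: "\<xi> \<in> bdry G X \<Longrightarrow> nth_edge \<xi> i = Some e \<Longrightarrow> e \<in> edges G"
  by (cases \<xi>) (auto simp: bdry_BV bdry_BF bdry_BI is_fpath_def is_ipath_def split: if_splits)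

lemma E2: "\<xi> \<in> bdry G X \<Longrightarrow> nth_edge \<xi> i = Some e \<Longrightarrow> nth_edge \<xi> (Suc i) = Some e' \<Longrightarrow> rng G e = src G e'"
  by (cases \<xi>) (auto simp: bdry_BV bdry_BF bdry_BI is_fpath_def is_ipath_def split: if_splits)

lemma E3: "\<xi> \<in> bdry G X \<Longrightarrow> nth_edge \<xi> 0 = Some e \<Longrightarrow> src G e = bsrc G \<xi>"
  by (cases \<xi>) (auto simp: bdry_BV bdry_BF bdry_BI is_fpath_def hd_conv_nth split: if_splits)

lemma E4: "nth_edge \<xi> j \<noteq> None \<Longrightarrow> i \<le> j \<Longrightarrow> nth_edge \<xi> i \<noteq> None"
  by (cases \<xi>) (auto split: if_splits)

lemma E5: "\<xi> \<in> bdry G X \<Longrightarrow> nth_edge \<xi> i = Some e \<Longrightarrow> nth_edge \<xi> (Suc i) = None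
   \<Longrightarrow> is_sink G (rng G e) \<or> rng G e \<in> Reg G - X"
proof (cases \<xi>)
  case (BF es)
  assume a: "\<xi> \<in> bdry G X" "nth_edge \<xi> i = Some e" "nth_edge \<xi> (Suc i) = None"
  then have "i < length es" "\<not> Suc i < length es" "e = es ! i" using BF by (auto split: if_splits)
  then have "i = length es - 1" by linarith
  moreover have "es \<noteq> []" using \<open>i < length es\<close> by auto
  ultimately have "e = last es" using \<open>e = es ! i\<close> by (simp add: last_conv_nth)
  then show ?thesis using a BF by (simp add: bdry_BF)
qed auto

lemma fpath_ne: "is_fpath G es \<Longrightarrow> es \<noteq> []" by (simp add: is_fpath_def)

lemma E6: "\<xi> \<in> bdry G X \<Longrightarrow> nth_edge \<xi> 0 = None \<Longrightarrow>
   \<xi> = BV (bsrc G \<xi>) \<and> bsrc G \<xi> \<in> verts G \<and> (is_sink G (bsrc G \<xi>) \<or> bsrc G \<xi> \<in> Reg G - X)"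
  by (cases \<xi>) (auto simp: bdry_BV bdry_BF dest: fpath_ne split: if_splits)

lemma E7: "wf_graph G \<Longrightarrow> \<xi> \<in> bdry G X \<Longrightarrow> bsrc G \<xi> \<in> verts G"
proof (cases "nth_edge \<xi> 0")
  case None
  assume "\<xi> \<in> bdry G X" then show ?thesis using E6 None by blast
next
  case (Some e)
  assume "wf_graph G" "\<xi> \<in> bdry G X"
  then show ?thesis using E1[of \<xi> G X 0 e] E3[of \<xi> G X e] Some by (auto simp: wf_graph_def)
qed

lemma bpath_ext:
  assumes "\<zeta> \<in> bdry G X" "\<eta> \<in> bdry G X" "bsrc G \<zeta> = bsrc G \<eta>" "\<forall>i. nth_edge \<zeta> i = nth_edge \<eta> i"
  shows "\<zeta> = \<eta>"
proof (cases "nth_edge \<zeta> 0")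
  case None
  then have "nth_edge \<eta> 0 = None" using assms by simp
  then show ?thesis using E6[OF assms(1) None] E6[OF assms(2)] assms(3) by metis
next
  case (Some e)
  show ?thesis
  proof (cases \<zeta>)
    case (BV v) then show ?thesis using Some by simp
  next
    case (BF es)
    show ?thesis
    proof (cases \<eta>)
      case (BV w) then show ?thesis using Some assms(4) by simp
    next
      case (BF es')
      have "length es = length es'"
      proof (rule ccontr)
        assume "length es \<noteq> length es'"
        then have "length es < length es' \<or> length es' < length es" by linarith
        then show False
        proof
          assume "length es < length es'"
          then show False using assms(4)[rule_format, of "length es"] \<open>\<zeta> = BF es\<close> BF by simp
        next
          assume "length es' < length es"
          then show False using assms(4)[rule_format, of "length es'"] \<open>\<zeta> = BF es\<close> BF by simp
        qed
      qed
      moreover have "\<forall>i<length es. es ! i = es' ! i"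
      proof (intro allI impI)
        fix i assume "i < length es"
        then show "es ! i = es' ! i" using assms(4)[rule_format, of i] \<open>\<zeta> = BF es\<close> BF \<open>length es = length es'\<close> by simp
      qed
      ultimately show ?thesis using \<open>\<zeta> = BF es\<close> BF by (simp add: nth_equalityI)
    next
      case (BI g)
      then show ?thesis using assms(4)[rule_format, of "length es"] \<open>\<zeta> = BF es\<close> by simp
    qed
  next
    case (BI f)
    show ?thesis
    proof (cases \<eta>)
      case (BV w) then show ?thesis using BI assms(4)[rule_format, of 0] by simp
    next
      case (BF es')
      then show ?thesis using assms(4)[rule_format, of "length es'"] BI by simp
    next
      case (BI g)
      then show ?thesis using assms(4) \<open>\<zeta> = BI f\<close> by auto
    qed
  qed
qed

lemma nth_prepend: "nth_edge (prepend a \<eta>) i = (if i < length a then Some (a ! i) else nth_edge \<eta> (i - length a))"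
  by (cases \<eta>) (auto simp: nth_append)

lemma bsrc_prepend: "a \<noteq> [] \<Longrightarrow> bsrc G (prepend a \<eta>) = src G (hd a)"
  by (cases \<eta>) (auto simp: hd_conv_nth nth_append)

lemma prepend_bdry:
  assumes a: "is_fpath G a" and e: "\<eta> \<in> bdry G X" and s: "bsrc G \<eta> = rng G (last a)"
  shows "prepend a \<eta> \<in> bdry G X"
proof (cases \<eta>)
  case (BV v)
  then show ?thesis using assms fpath_ne[OF a] by (simp add: bdry_BV bdry_BF)
next
  case (BF es)
  have ne: "a \<noteq> []" "es \<noteq> []" using a e BF fpath_ne by (auto simp: bdry_BF)
  have "is_fpath G (a @ es)"
    unfolding is_fpath_def
  proof (intro conjI allI impI)
    show "a @ es \<noteq> []" using ne by simp
    show "set (a @ es) \<subseteq> edges G" using a e BF by (auto simp: is_fpath_def bdry_BF)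
    fix i assume i: "Suc i < length (a @ es)"
    consider "Suc i < length a" | "Suc i = length a" | "length a \<le> i" by linarith
    then show "rng G ((a @ es) ! i) = src G ((a @ es) ! Suc i)"
    proof cases
      case 1 then show ?thesis using a by (simp add: nth_append is_fpath_def)
    next
      case 2
      then have ii: "i = length a - 1" by simp
      have "(a @ es) ! i = last a" "(a @ es) ! Suc i = hd es" using ne 2 unfolding ii
        by (auto simp: nth_append last_conv_nth hd_conv_nth)
      then show ?thesis using s BF by simp
    next
      case 3 then show ?thesis using e BF i by (auto simp: nth_append is_fpath_def bdry_BF Suc_diff_le)
    qed
  qed
  then show ?thesis using e BF ne by (simp add: bdry_BF)
next
  case (BI f)
  have ne: "a \<noteq> []" using a fpath_ne by auto
  have "is_ipath G (\<lambda>i. if i < length a then a ! i else f (i - length a))"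
    unfolding is_ipath_def
  proof (intro allI conjI)
    fix i
    show "(if i < length a then a ! i else f (i - length a)) \<in> edges G"
      using a e BI by (auto simp: is_fpath_def is_ipath_def bdry_BI)
    consider "Suc i < length a" | "Suc i = length a" | "length a \<le> i" by linarith
    then show "rng G (if i < length a then a ! i else f (i - length a)) =
               src G (if Suc i < length a then a ! Suc i else f (Suc i - length a))"
    proof cases
      case 1 then show ?thesis using a by (simp add: is_fpath_def)
    next
      case 2
      then have ii: "i = length a - 1" by simp
      have "a ! i = last a" using ne unfolding ii by (auto simp: last_conv_nth)
      then show ?thesis using s BI 2 by simp
    next
      case 3 then show ?thesis using e BI by (auto simp: is_ipath_def bdry_BI Suc_diff_le)
    qed
  qed
  then show ?thesis using BI by (simp add: bdry_BI)
qed


section \<open>Closeness, theta, fixed points\<close>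

definition close :: "('v, 'e) graph \<Rightarrow> nat \<Rightarrow> ('v, 'e) bpath \<Rightarrow> ('v, 'e) bpath \<Rightarrow> bool" where
  "close G N \<zeta> \<xi> \<longleftrightarrow> bsrc G \<zeta> = bsrc G \<xi> \<and> (\<forall>i<N. nth_edge \<zeta> i = nth_edge \<xi> i)"

lemma close_refl: "close G N \<xi> \<xi>" by (simp add: close_def)

lemma close_prefix: "close G N \<zeta> \<xi> \<Longrightarrow> length a \<le> N \<Longrightarrow> has_prefix a \<zeta> \<longleftrightarrow> has_prefix a \<xi>"
  unfolding close_def has_prefix_nth by auto

lemma U_close:
  assumes "\<zeta> \<in> bdry G X" "\<xi> \<in> bdry G X" "close G N \<zeta> \<xi>" "length (pos_part r) \<le> N"
  shows "\<zeta> \<in> U G X r \<longleftrightarrow> \<xi> \<in> U G X r"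
proof -
  have hp: "has_prefix (pos_part r) \<zeta> \<longleftrightarrow> has_prefix (pos_part r) \<xi>" using close_prefix assms(3,4) by blast
  have s: "bsrc G \<zeta> = bsrc G \<xi>" using assms(3) close_def by auto
  show ?thesis unfolding U_def Let_def using assms(1,2) hp s by auto
qed

lemma ind_close:
  assumes "\<zeta> \<in> bdry G X" "\<xi> \<in> bdry G X" "close G N \<zeta> \<xi>" "length (pos_part r) \<le> N"
  shows "ind G X r \<zeta> = ind G X r \<xi>"
  using U_close[OF assms] by (simp add: ind_def)

lemma U_sub: "\<xi> \<in> U G X t \<Longrightarrow> \<xi> \<in> bdry G X"
  unfolding U_def Let_def by (auto split: if_splits)

lemma U_facts:
  assumes "\<xi> \<in> U G X t"
  shows "is_ab_inv t" "\<xi> \<in> bdry G X"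
    "pos_part t \<noteq> [] \<Longrightarrow> has_prefix (pos_part t) \<xi> \<and> is_fpath G (pos_part t)"
    "pos_part t \<noteq> [] \<Longrightarrow> neg_part t \<noteq> [] \<Longrightarrow> last (pos_part t) \<noteq> last (neg_part t)"
    "pos_part t = [] \<Longrightarrow> neg_part t \<noteq> [] \<Longrightarrow> bsrc G \<xi> = rng G (last (neg_part t)) \<and> is_fpath G (neg_part t)"
  using assms unfolding U_def Let_def by (auto split: if_splits)

lemma theta_finv:
  assumes "is_ab_inv t"
  shows "theta G (finv t) \<zeta> = prepend (neg_part t) (drop_pre G (length (pos_part t)) \<zeta>)"
proof -
  have "finv t = finv (Wp (pos_part t) @ Wn (neg_part t))"
    using arg_cong[where f=finv, OF ab_decomp[OF assms]] .
  then have "finv t = Wp (neg_part t) @ Wn (pos_part t)" by simp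
  then show ?thesis unfolding theta_def by simp
qed

lemma fix_inf:
  assumes U: "\<zeta> \<in> U G X t" and t: "t \<noteq> []" and fx: "theta G (finv t) \<zeta> = \<zeta>"
  shows "\<exists>f. \<zeta> = BI f \<and> length (pos_part t) \<noteq> length (neg_part t) \<and>
     (\<forall>i. f i = (if i < length (neg_part t) then neg_part t ! i
                 else f (i - length (neg_part t) + length (pos_part t))))"
proof -
  define p where "p = pos_part t"
  define q where "q = neg_part t"
  note F = U_facts[OF U, folded p_def q_def]
  have pq: "p \<noteq> [] \<or> q \<noteq> []" using ab_Nil[OF F(1)] t p_def q_def by auto
  have th: "prepend q (drop_pre G (length p) \<zeta>) = \<zeta>"
    using fx unfolding theta_finv[OF F(1)] p_def q_def .
  have nolast: "p \<noteq> q"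
  proof
    assume "p = q"
    then have "p \<noteq> []" "q \<noteq> []" using pq by auto
    then show False using F(4) \<open>p = q\<close> by simp
  qed
  show ?thesis
  proof (cases \<zeta>)
    case (BV v)
    have "p = []" using F(3) BV by (cases p) auto
    then have "q \<noteq> []" using pq by simp
    then show ?thesis using th BV \<open>p = []\<close> by simp
  next
    case (BF es)
    have esne: "es \<noteq> []" using F(2) unfolding BF bdry_BF by (auto dest: fpath_ne)
    have th': "prepend q (drop_pre G (length p) (BF es)) = BF es" using th unfolding BF .
    show ?thesis
    proof (cases "p = []")
      case True
      then have "q \<noteq> []" using pq by simp
      have "prepend q (drop_pre G (length p) (BF es)) = BF (q @ es)" using True esne by simp
      then have "q @ es = es" using th' by simp
      then show ?thesis using \<open>q \<noteq> []\<close> by simp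
    next
      case False
      have hp: "has_prefix p (BF es)" using F(3)[OF False] unfolding BF by simp
      then have l: "length p \<le> length es" and tk: "take (length p) es = p" by auto
      show ?thesis
      proof (cases "length p < length es")
        case True
        have "prepend q (drop_pre G (length p) (BF es)) = BF (q @ drop (length p) es)" using True by simp
        then have e: "q @ drop (length p) es = es" using th' by simp
        have lq: "length q = length p" using arg_cong[where f=length, OF e] True by simp
        have "take (length q) (q @ drop (length p) es) = q" by simp
        then have tq: "take (length q) es = q" unfolding e .
        have "p = q" using tk tq unfolding lq by (rule subst)
        then show ?thesis using nolast by simp
      next
        case False
        then have lp: "length p = length es" using l by simp
        then have "prepend q (drop_pre G (length p) (BF es)) = prepend q (BV (rng G (last es)))" by simp
        then have h: "prepend q (BV (rng G (last es))) = BF es" using th' by simp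
        have "q = es"
        proof (cases "q = []")
          case True then show ?thesis using h by simp
        next
          case False then show ?thesis using h by simp
        qed
        moreover have "p = es" using tk lp by simp
        ultimately show ?thesis using nolast by simp
      qed
    qed
  next
    case (BI f)
    have eq: "\<forall>i. f i = (if i < length q then q ! i else f (i - length q + length p))"
    proof
      fix i
      have c: "prepend q (drop_pre G (length p) (BI f)) = BI (\<lambda>i. if i < length q then q ! i else f (i - length q + length p))"
        by simp
      have "BI (\<lambda>i. if i < length q then q ! i else f (i - length q + length p)) = \<zeta>"
        using th unfolding BI c .
      from this[unfolded BI] have h: "(\<lambda>i. if i < length q then q ! i else f (i - length q + length p)) = f"
        by (rule bpath.inject(3)[THEN iffD1])
      show "f i = (if i < length q then q ! i else f (i - length q + length p))"
        by (subst (1) h[symmetric]) (rule refl)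
    qed
    have "length p \<noteq> length q"
    proof
      assume len: "length p = length q"
      then have "p \<noteq> []" "q \<noteq> []" using pq by auto
      then have hp: "has_prefix p (BI f)" using F(3) BI by simp
      have "p = q"
      proof (rule nth_equalityI)
        show "length p = length q" by fact
        fix i assume "i < length p"
        then show "p ! i = q ! i" using hp eq[rule_format, of i] len by simp
      qed
      then show False using nolast by simp
    qed
    show ?thesis
    proof (intro exI[of _ f] conjI)
      show "\<zeta> = BI f" by fact
      show "length (pos_part t) \<noteq> length (neg_part t)" using \<open>length p \<noteq> length q\<close> unfolding p_def q_def .
      show "\<forall>i. f i = (if i < length (neg_part t) then neg_part t ! i
                 else f (i - length (neg_part t) + length (pos_part t)))" using eq unfolding p_def q_def .
    qed
  qed
qed

lemma fix_unique:
  assumes f: "\<forall>i. f i = (if i < nq then q ! i else f (i - nq + np))"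
      and g: "\<forall>i. g i = (if i < nq then q ! i else g (i - nq + np))"
      and ne: "np \<noteq> nq" and agree: "\<forall>i<N. f i = g i" and N: "np + nq \<le> N"
  shows "f = g"
proof
  fix i show "f i = g i"
  proof (induction i rule: less_induct)
    case (less i)
    show ?case
    proof (cases "i < N")
      case True then show ?thesis using agree by simp
    next
      case False
      show ?thesis
      proof (cases "np < nq")
        case True
        have ni: "\<not> i < nq" using False N by linarith
        have a: "f i = f (i - nq + np)" using f[rule_format, of i] unfolding if_not_P[OF ni] .
        have b: "g i = g (i - nq + np)" using g[rule_format, of i] unfolding if_not_P[OF ni] .
        have "i - nq + np < i" using True False N by linarith
        then have c: "f (i - nq + np) = g (i - nq + np)" by (rule less.IH)
        show ?thesis by (simp only: a b c)
      next
        case c: False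
        define j where "j = i - (np - nq)"
        have jn: "\<not> j < nq" using False N c unfolding j_def by linarith
        have je: "j - nq + np = i" using False N c ne unfolding j_def by linarith
        have a: "f j = f i" using f[rule_format, of j] unfolding if_not_P[OF jn] je .
        have b: "g j = g i" using g[rule_format, of j] unfolding if_not_P[OF jn] je .
        have "j < i" using False N c ne unfolding j_def by linarith
        then have "f j = g j" by (rule less.IH)
        then show ?thesis unfolding a b .
      qed
    qed
  qed
qed

lemma fix_periodic:
  assumes f: "\<forall>i. f i = (if i < nq then q ! i else f (i - nq + np))" and ne: "np \<noteq> (nq::nat)"
  shows "\<exists>m d. 0 < d \<and> (\<forall>i\<ge>m. f (i + d) = f i)"
proof (cases "np < nq")
  case True
  have "\<forall>i\<ge>np. f (i + (nq - np)) = f i"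
  proof (intro allI impI)
    fix i assume "np \<le> i"
    then have a: "\<not> i + (nq - np) < nq" "i + (nq - np) - nq + np = i" using True by linarith+
    show "f (i + (nq - np)) = f i" using f[rule_format, of "i + (nq - np)"] unfolding if_not_P[OF a(1)] a(2) .
  qed
  moreover have "0 < nq - np" using True by simp
  ultimately show ?thesis by blast
next
  case False
  have "\<forall>i\<ge>nq. f (i + (np - nq)) = f i"
  proof (intro allI impI)
    fix i assume "nq \<le> i"
    then have a: "\<not> i < nq" "i - nq + np = i + (np - nq)" using False ne by linarith+
    show "f (i + (np - nq)) = f i" using f[rule_format, of i] unfolding if_not_P[OF a(1)] a(2) by simp
  qed
  moreover have "0 < np - nq" using False ne by simp
  ultimately show ?thesis by blast
qed


section \<open>Existence of boundary paths, perturbation\<close>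

definition nxt :: "('v, 'e) graph \<Rightarrow> 'v \<Rightarrow> 'e" where
  "nxt G v = (SOME e. e \<in> edges G \<and> src G e = v)"

definition stopv :: "('v, 'e) graph \<Rightarrow> 'v set \<Rightarrow> 'v \<Rightarrow> bool" where
  "stopv G X v \<longleftrightarrow> is_sink G v \<or> v \<in> Reg G - X"

primrec vseq :: "('v, 'e) graph \<Rightarrow> 'v \<Rightarrow> nat \<Rightarrow> 'v" where
  "vseq G v 0 = v"
| "vseq G v (Suc n) = rng G (nxt G (vseq G v n))"

lemma nxt_ok:
  assumes "v \<in> verts G" "\<not> stopv G X v"
  shows "nxt G v \<in> edges G \<and> src G (nxt G v) = v"
proof -
  have "\<exists>e. e \<in> edges G \<and> src G e = v" using assms by (auto simp: stopv_def is_sink_def)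
  then show ?thesis unfolding nxt_def by (rule someI_ex)
qed

lemma vseq_verts:
  fixes X :: "'v set"
  assumes wf: "wf_graph G" and v: "v \<in> verts G"
  shows "(\<forall>j<n. \<not> stopv G X (vseq G v j)) \<Longrightarrow> vseq G v n \<in> verts G"
proof (induction n)
  case 0 then show ?case using v by simp
next
  case (Suc n)
  then have h1: "vseq G v n \<in> verts G" and h2: "\<not> stopv G X (vseq G v n)" by auto
  have "nxt G (vseq G v n) \<in> edges G" using nxt_ok[OF h1 h2] by simp
  then show ?case using wf by (simp add: wf_graph_def)
qed

lemma ipath_fpath: "is_ipath G f \<Longrightarrow> 0 < n \<Longrightarrow> is_fpath G (map f [0..<n])"
  unfolding is_fpath_def is_ipath_def by auto

lemma bpath_exists:
  assumes wf: "wf_graph G" and v: "v \<in> verts G"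
  shows "\<exists>\<eta>\<in>bdry G X. bsrc G \<eta> = v"
proof (cases "\<exists>n. stopv G X (vseq G v n)")
  case True
  define n where "n = (LEAST n. stopv G X (vseq G v n))"
  have sn: "stopv G X (vseq G v n)" using True unfolding n_def by (rule LeastI_ex)
  have bef: "\<forall>j<n. \<not> stopv G X (vseq G v j)"
  proof (intro allI impI)
    fix j assume "j < n"
    then show "\<not> stopv G X (vseq G v j)" unfolding n_def by (rule not_less_Least)
  qed
  have ok: "\<And>j. j < n \<Longrightarrow> nxt G (vseq G v j) \<in> edges G \<and> src G (nxt G (vseq G v j)) = vseq G v j"
  proof -
    fix j assume "j < n"
    have h1: "vseq G v j \<in> verts G"
      by (rule vseq_verts[OF wf v, where X=X]) (use bef \<open>j < n\<close> in auto)
    have h2: "\<not> stopv G X (vseq G v j)" using bef \<open>j < n\<close> by blast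
    from h1 h2 show "nxt G (vseq G v j) \<in> edges G \<and> src G (nxt G (vseq G v j)) = vseq G v j"
      by (rule nxt_ok)
  qed
  show ?thesis
  proof (cases "n = 0")
    case True
    then show ?thesis using sn v by (intro bexI[of _ "BV v"]) (auto simp: bdry_BV stopv_def)
  next
    case False
    define es where "es = map (\<lambda>i. nxt G (vseq G v i)) [0..<n]"
    have fp: "is_fpath G es"
      unfolding is_fpath_def es_def
    proof (intro conjI allI impI)
      show "map (\<lambda>i. nxt G (vseq G v i)) [0..<n] \<noteq> []" using False by simp
      show "set (map (\<lambda>i. nxt G (vseq G v i)) [0..<n]) \<subseteq> edges G" using ok by auto
      fix i assume "Suc i < length (map (\<lambda>i. nxt G (vseq G v i)) [0..<n])"
      then have "Suc i < n" by simp
      then show "rng G (map (\<lambda>i. nxt G (vseq G v i)) [0..<n] ! i) = src G (map (\<lambda>i. nxt G (vseq G v i)) [0..<n] ! Suc i)"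
        using ok[of "Suc i"] by simp
    qed
    have la: "last es = nxt G (vseq G v (n - 1))" using False unfolding es_def by (simp add: last_map)
    have sn1: "Suc (n - 1) = n" using False by simp
    have "rng G (nxt G (vseq G v (n - 1))) = vseq G v (Suc (n - 1))" by simp
    then have "rng G (last es) = vseq G v n" unfolding la sn1 .
    then have "BF es \<in> bdry G X" using fp sn by (simp add: bdry_BF stopv_def)
    moreover have "bsrc G (BF es) = v" using ok[of 0] False unfolding es_def by (simp add: hd_map)
    ultimately show ?thesis by blast
  qed
next
  case False
  have ok: "\<And>j. nxt G (vseq G v j) \<in> edges G \<and> src G (nxt G (vseq G v j)) = vseq G v j"
  proof -
    fix j
    have all: "\<forall>j. \<not> stopv G X (vseq G v j)" using False by blast
    have h1: "vseq G v j \<in> verts G" by (rule vseq_verts[OF wf v, where X=X]) (simp add: all)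
    show "nxt G (vseq G v j) \<in> edges G \<and> src G (nxt G (vseq G v j)) = vseq G v j"
      using nxt_ok[OF h1] all by blast
  qed
  have "BI (\<lambda>i. nxt G (vseq G v i)) \<in> bdry G X"
    unfolding bdry_BI is_ipath_def
  proof (intro allI conjI)
    fix i
    show "nxt G (vseq G v i) \<in> edges G" using ok[of i] by simp
    show "rng G (nxt G (vseq G v i)) = src G (nxt G (vseq G v (Suc i)))" using ok[of "Suc i"] by simp
  qed
  moreover have "bsrc G (BI (\<lambda>i. nxt G (vseq G v i))) = v" using ok[of 0] by simp
  ultimately show ?thesis by blast
qed

lemma perturb:
  fixes G :: "('v, 'e) graph"
  assumes wf: "wf_graph G" and L: "rel_condition_L G X" and ip: "is_ipath G f"
    and d: "0 < d" and per: "\<forall>i\<ge>m. f (i + d) = f i"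
  shows "\<exists>\<zeta>\<in>bdry G X. \<zeta> \<noteq> BI f \<and> close G M \<zeta> (BI f)"
proof -
  define M' where "M' = Suc (max M m)"
  have "f (M' + d) = f M'" using per[rule_format, of M'] M'_def by simp
  then have "0 < d \<and> (\<exists>i\<ge>M'. src G (f i) = src G (f (i + d)))" using d by auto
  then have ex: "\<exists>k. 0 < k \<and> (\<exists>i\<ge>M'. src G (f i) = src G (f (i + k)))" by blast
  define k where "k = (LEAST k. 0 < k \<and> (\<exists>i\<ge>M'. src G (f i) = src G (f (i + k))))"
  have kk: "0 < k \<and> (\<exists>i\<ge>M'. src G (f i) = src G (f (i + k)))"
    unfolding k_def using ex by (rule LeastI_ex)
  have kmin: "\<And>k'. k' < k \<Longrightarrow> \<not> (0 < k' \<and> (\<exists>i\<ge>M'. src G (f i) = src G (f (i + k'))))"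
    unfolding k_def by (rule not_less_Least)
  obtain i where i: "i \<ge> M'" "src G (f i) = src G (f (i + k))" using kk by blast
  have k0: "0 < k" using kk by simp
  define cs where "cs = map (\<lambda>j. f (i + j)) [0..<k]"
  have cs_nth: "\<And>j. j < k \<Longrightarrow> cs ! j = f (i + j)" unfolding cs_def by simp
  have lcs: "length cs = k" unfolding cs_def by simp
  have fpc: "is_fpath G cs"
    unfolding is_fpath_def
  proof (intro conjI allI impI)
    show "cs \<noteq> []" using k0 unfolding cs_def by simp
    show "set cs \<subseteq> edges G" using ip unfolding cs_def is_ipath_def by auto
    fix j assume "Suc j < length cs"
    then show "rng G (cs ! j) = src G (cs ! Suc j)" using ip cs_nth lcs unfolding is_ipath_def by simp
  qed
  have "last cs = f (i + (k - 1))" using k0 unfolding cs_def by (simp add: last_map)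
  then have lastc: "rng G (last cs) = src G (hd cs)"
  proof -
    assume "last cs = f (i + (k - 1))"
    moreover have "rng G (f (i + (k - 1))) = src G (f (Suc (i + (k - 1))))" using ip unfolding is_ipath_def by blast
    moreover have "Suc (i + (k - 1)) = i + k" using k0 by simp
    moreover have "hd cs = f i" using k0 unfolding cs_def by (simp add: hd_map)
    ultimately show ?thesis using i(2) by simp
  qed
  have dist: "distinct (map (src G) cs)"
  proof (rule distinct_conv_nth[THEN iffD2], intro allI impI)
    fix a b assume ab: "a < length (map (src G) cs)" "b < length (map (src G) cs)" "a \<noteq> b"
    show "map (src G) cs ! a \<noteq> map (src G) cs ! b"
    proof
      assume eq: "map (src G) cs ! a = map (src G) cs ! b"
      have eq2: "src G (f (i + a)) = src G (f (i + b))" using eq ab lcs cs_nth by simp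
      show False
      proof (cases "a < b")
        case True
        have "\<not> (0 < b - a \<and> (\<exists>i'\<ge>M'. src G (f i') = src G (f (i' + (b - a)))))"
          using kmin[of "b - a"] ab lcs by simp
        moreover have "i + a \<ge> M'" "i + a + (b - a) = i + b" using i True by auto
        ultimately have "src G (f (i + a)) \<noteq> src G (f (i + a + (b - a)))" using True by auto
        then show False using eq2 \<open>i + a + (b - a) = i + b\<close> by simp
      next
        case False
        then have "b < a" using ab by simp
        have "\<not> (0 < a - b \<and> (\<exists>i'\<ge>M'. src G (f i') = src G (f (i' + (a - b)))))"
          using kmin[of "a - b"] ab lcs by simp
        moreover have "i + b \<ge> M'" "i + b + (a - b) = i + a" using i \<open>b < a\<close> by auto
        ultimately have "src G (f (i + b)) \<noteq> src G (f (i + b + (a - b)))" using \<open>b < a\<close> by auto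
        then show False using eq2 \<open>i + b + (a - b) = i + a\<close> by simp
      qed
    qed
  qed
  have cyc: "is_cycle G cs" unfolding is_cycle_def using fpc lastc dist by simp
  have hpre: "\<And>n. 0 < n \<Longrightarrow> is_fpath G (map f [0..<n])" using ip ipath_fpath by blast
  have src0: "\<And>n. 0 < n \<Longrightarrow> bsrc G (BF (map f [0..<n])) = src G (f 0)" by (simp add: hd_map)
  from L cyc have "(\<forall>l<length cs. src G (cs ! l) \<notin> Reg G - X) \<longrightarrow> has_exit G cs"
    unfolding rel_condition_L_def by blast
  then consider (Y) l where "l < k" "src G (f (i + l)) \<in> Reg G - X" | (E) "has_exit G cs"
    using cs_nth lcs by fastforce
  then show ?thesis
  proof cases
    case Y
    define n where "n = i + l"
    have n0: "0 < n" "M < n" using i Y M'_def n_def by auto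
    define \<zeta> :: "('v, 'e) bpath" where "\<zeta> = BF (map f [0..<n])"
    have "last (map f [0..<n]) = f (n - 1)" using n0 by (simp add: last_map)
    moreover have "rng G (f (n - 1)) = src G (f n)" using ip n0 unfolding is_ipath_def by (metis Suc_diff_1)
    ultimately have "rng G (last (map f [0..<n])) \<in> Reg G - X" using Y n_def by simp
    then have "\<zeta> \<in> bdry G X" unfolding \<zeta>_def bdry_BF using hpre[OF n0(1)] by simp
    moreover have "\<zeta> \<noteq> BI f" unfolding \<zeta>_def by simp
    moreover have "close G M \<zeta> (BI f)" unfolding close_def \<zeta>_def using n0 src0[OF n0(1)] by auto
    ultimately show ?thesis by blast
  next
    case E
    then obtain e l where e: "e \<in> edges G" "l < k" "src G e = src G (f (i + l))" "e \<noteq> f (i + l)"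
      unfolding has_exit_def using cs_nth lcs by auto
    define n where "n = i + l"
    have n0: "0 < n" "M < n" using i e M'_def n_def by auto
    define a where "a = map f [0..<n] @ [e]"
    have fpa: "is_fpath G a"
      unfolding is_fpath_def
    proof (intro conjI allI impI)
      show "a \<noteq> []" unfolding a_def by simp
      show "set a \<subseteq> edges G" using ip e unfolding a_def is_ipath_def by auto
      fix j assume j: "Suc j < length a"
      show "rng G (a ! j) = src G (a ! Suc j)"
      proof (cases "Suc j < n")
        case True then show ?thesis using ip unfolding a_def is_ipath_def by (simp add: nth_append)
      next
        case False
        then have "Suc j = n" using j unfolding a_def by simp
        then show ?thesis using ip e n_def unfolding a_def is_ipath_def by (simp add: nth_append)
      qed
    qed
    have "rng G e \<in> verts G" using wf e unfolding wf_graph_def by blast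
    then obtain \<eta> where eta: "\<eta> \<in> bdry G X" "bsrc G \<eta> = rng G e" using bpath_exists[OF wf] by blast
    define \<zeta> where "\<zeta> = prepend a \<eta>"
    have "\<zeta> \<in> bdry G X" unfolding \<zeta>_def using prepend_bdry[OF fpa eta(1)] eta(2) unfolding a_def by simp
    moreover have nz: "\<And>j. j \<le> n \<Longrightarrow> nth_edge \<zeta> j = Some (if j < n then f j else e)"
      unfolding \<zeta>_def nth_prepend a_def by (auto simp: nth_append)
    have "\<zeta> \<noteq> BI f"
    proof
      assume "\<zeta> = BI f"
      then have "nth_edge \<zeta> n = Some (f n)" by simp
      then show False using nz[of n] e n_def by simp
    qed
    moreover have "hd (map f [0..<n]) = f 0" using n0 by (simp add: hd_map)
    moreover have "close G M \<zeta> (BI f)"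
      unfolding close_def using nz n0 bsrc_prepend[of a G \<eta>] \<open>hd (map f [0..<n]) = f 0\<close>
      unfolding \<zeta>_def a_def by (auto simp: hd_append)
    ultimately show ?thesis by blast
  qed
qed


section \<open>Separation of points by D0\<close>

lemma lspan_single: "f \<in> S \<Longrightarrow> f \<in> lspan S"
  unfolding lspan_def by (rule CollectI, rule exI[of _ "{f}"], rule exI[of _ "\<lambda>_. 1"]) simp

lemma lspan_zero: "(\<lambda>_. 0) \<in> lspan S"
  unfolding lspan_def by (rule CollectI, rule exI[of _ "{}"], rule exI[of _ "\<lambda>_. 1"]) simp

lemma lspan_diff:
  assumes "f \<in> S" "g \<in> S" "f \<noteq> g"
  shows "(\<lambda>x. f x - g x) \<in> lspan S"
proof -
  have "(\<lambda>x. f x - g x) = (\<lambda>x. \<Sum>h\<in>{f, g}. (if h = f then 1 else -1) * h x)"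
    using assms(3) by (simp add: sum.insert)
  moreover have "finite {f, g}" "{f, g} \<subseteq> S" using assms by auto
  ultimately show ?thesis unfolding lspan_def by (intro CollectI exI conjI)
qed

lemma ind_D0: "w \<in> FG G \<Longrightarrow> w \<noteq> [] \<Longrightarrow> ind G X w \<in> D0 G X"
  unfolding D0_def by (rule lspan_single) blast

lemma indv_D0: "v \<in> verts G \<Longrightarrow> indv G X v \<in> D0 G X"
  unfolding D0_def by (rule lspan_single) blast

lemma D0_diff: "f \<in> {ind G X p | p. p \<in> FG G \<and> p \<noteq> []} \<union> {indv G X v | v. v \<in> verts G} \<Longrightarrow>
  g \<in> {ind G X p | p. p \<in> FG G \<and> p \<noteq> []} \<union> {indv G X v | v. v \<in> verts G} \<Longrightarrow> f \<noteq> g \<Longrightarrow>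
  (\<lambda>x. f x - g x) \<in> D0 G X"
  unfolding D0_def by (rule lspan_diff)

definition pre :: "('v, 'e) bpath \<Rightarrow> nat \<Rightarrow> 'e list" where
  "pre \<xi> k = map (\<lambda>j. the (nth_edge \<xi> j)) [0..<k]"

lemma pre_ok:
  assumes "\<xi> \<in> bdry G X" "0 < k" "nth_edge \<xi> (k - 1) \<noteq> None"
  shows "is_fpath G (pre \<xi> k)" "has_prefix (pre \<xi> k) \<xi>"
proof -
  have some: "\<And>j. j < k \<Longrightarrow> nth_edge \<xi> j = Some (the (nth_edge \<xi> j))"
  proof -
    fix j assume "j < k"
    then have "nth_edge \<xi> j \<noteq> None" using E4[OF assms(3), of j] by simp
    then show "nth_edge \<xi> j = Some (the (nth_edge \<xi> j))" by auto
  qed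
  show "is_fpath G (pre \<xi> k)"
    unfolding is_fpath_def pre_def
  proof (intro conjI allI impI)
    show "map (\<lambda>j. the (nth_edge \<xi> j)) [0..<k] \<noteq> []" using assms(2) by simp
    show "set (map (\<lambda>j. the (nth_edge \<xi> j)) [0..<k]) \<subseteq> edges G"
    proof
      fix e assume "e \<in> set (map (\<lambda>j. the (nth_edge \<xi> j)) [0..<k])"
      then obtain j where "j < k" "e = the (nth_edge \<xi> j)" by auto
      then show "e \<in> edges G" using some[of j] E1[OF assms(1), of j e] by simp
    qed
    fix i assume "Suc i < length (map (\<lambda>j. the (nth_edge \<xi> j)) [0..<k])"
    then have "Suc i < k" by simp
    then show "rng G (map (\<lambda>j. the (nth_edge \<xi> j)) [0..<k] ! i) = src G (map (\<lambda>j. the (nth_edge \<xi> j)) [0..<k] ! Suc i)"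
      using E2[OF assms(1) some[of i] some[of "Suc i"]] by simp
  qed
  show "has_prefix (pre \<xi> k) \<xi>" unfolding has_prefix_nth pre_def using some by simp
qed

lemma U_Wp: "is_fpath G w \<Longrightarrow> U G X (Wp w) = {\<xi> \<in> bdry G X. has_prefix w \<xi>}"
  unfolding U_def Let_def using fpath_ne[of G w] by simp

lemma Wp_FG': "is_fpath G w \<Longrightarrow> Wp w \<in> FG G \<and> Wp w \<noteq> []"
  using Wp_FG[of w G] fpath_ne[of G w] by (auto simp: is_fpath_def Wp_def)

lemma separate:
  assumes wf: "wf_graph G" and z: "\<zeta> \<in> bdry G X" and ne: "\<zeta> \<noteq> \<eta>"
  shows "\<exists>a\<in>D0 G X. a \<zeta> = (1::'k::field) \<and> a \<eta> = 0"
proof -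
  define v where "v = bsrc G \<zeta>"
  have v: "v \<in> verts G" using E7[OF wf z] v_def by simp
  have iv: "indv G X v \<zeta> = (1::'k)" using z v_def by (simp add: indv_def Uv_def)
  show ?thesis
  proof (cases "\<eta> \<in> bdry G X \<and> bsrc G \<eta> = v")
    case False
    then have "indv G X v \<eta> = (0::'k)" by (auto simp: indv_def Uv_def)
    then show ?thesis using iv indv_D0[OF v] by blast
  next
    case True
    then have eb: "\<eta> \<in> bdry G X" and es: "bsrc G \<eta> = v" by auto
    show ?thesis
    proof (cases "\<exists>k. 0 < k \<and> nth_edge \<zeta> (k - 1) \<noteq> None \<and> \<not> has_prefix (pre \<zeta> k) \<eta>")
      case True
      then obtain k where k: "0 < k" "nth_edge \<zeta> (k - 1) \<noteq> None" "\<not> has_prefix (pre \<zeta> k) \<eta>" by blast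
      note P = pre_ok[OF z k(1) k(2)]
      have "ind G X (Wp (pre \<zeta> k)) \<zeta> = (1::'k)" using P z by (simp add: ind_def U_Wp)
      moreover have "ind G X (Wp (pre \<zeta> k)) \<eta> = (0::'k)" using P k(3) by (simp add: ind_def U_Wp)
      moreover have "ind G X (Wp (pre \<zeta> k)) \<in> D0 G X" using Wp_FG'[OF P(1)] ind_D0 by blast
      ultimately show ?thesis by blast
    next
      case False
      then have agr: "\<And>k. 0 < k \<Longrightarrow> nth_edge \<zeta> (k - 1) \<noteq> None \<Longrightarrow> has_prefix (pre \<zeta> k) \<eta>" by blast
      have agr2: "\<And>i. nth_edge \<zeta> i \<noteq> None \<Longrightarrow> nth_edge \<eta> i = nth_edge \<zeta> i"
      proof -
        fix i assume h: "nth_edge \<zeta> i \<noteq> None"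
        have "has_prefix (pre \<zeta> (Suc i)) \<eta>" using agr[of "Suc i"] h by simp
        then have "nth_edge \<eta> i = Some (pre \<zeta> (Suc i) ! i)" unfolding has_prefix_nth pre_def by simp
        then show "nth_edge \<eta> i = nth_edge \<zeta> i" using h unfolding pre_def by (simp del: upt_Suc)
      qed
      have "\<exists>i. nth_edge \<zeta> i = None \<and> nth_edge \<eta> i \<noteq> None"
      proof (rule ccontr)
        assume "\<not> (\<exists>i. nth_edge \<zeta> i = None \<and> nth_edge \<eta> i \<noteq> None)"
        then have nn: "\<And>i. nth_edge \<zeta> i = None \<Longrightarrow> nth_edge \<eta> i = None" by blast
        have "\<forall>i. nth_edge \<zeta> i = nth_edge \<eta> i"
        proof
          fix i show "nth_edge \<zeta> i = nth_edge \<eta> i"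
          proof (cases "nth_edge \<zeta> i = None")
            case True then show ?thesis using nn[OF True] by simp
          next
            case False then show ?thesis using agr2[OF False] by simp
          qed
        qed
        then have "\<zeta> = \<eta>" using bpath_ext[OF z eb] es v_def by simp
        then show False using ne by simp
      qed
      then have ex: "\<exists>i. nth_edge \<zeta> i = None" by blast
      define n where "n = (LEAST i. nth_edge \<zeta> i = None)"
      have zn: "nth_edge \<zeta> n = None" unfolding n_def using ex by (rule LeastI_ex)
      have zb: "\<And>j. j < n \<Longrightarrow> nth_edge \<zeta> j \<noteq> None" unfolding n_def by (rule not_less_Least)
      obtain i where i: "nth_edge \<zeta> i = None" "nth_edge \<eta> i \<noteq> None"
        using \<open>\<exists>i. nth_edge \<zeta> i = None \<and> nth_edge \<eta> i \<noteq> None\<close> by blast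
      have "n \<le> i" unfolding n_def using i(1) by (rule Least_le)
      then have en: "nth_edge \<eta> n \<noteq> None" using E4[OF i(2)] by simp
      have Pe: "is_fpath G (pre \<eta> (Suc n))" "has_prefix (pre \<eta> (Suc n)) \<eta>" using pre_ok[OF eb, of "Suc n"] en by simp_all
      have nz: "\<not> has_prefix (pre \<eta> (Suc n)) \<zeta>" unfolding has_prefix_nth pre_def using zn by auto
      have a2: "ind G X (Wp (pre \<eta> (Suc n))) \<zeta> = (0::'k)" using nz by (simp add: ind_def U_Wp[OF Pe(1)])
      have a2': "ind G X (Wp (pre \<eta> (Suc n))) \<eta> = (1::'k)" using Pe eb by (simp add: ind_def U_Wp[OF Pe(1)])
      have D2: "ind G X (Wp (pre \<eta> (Suc n))) \<in> {ind G X p | p. p \<in> FG G \<and> p \<noteq> []} \<union> {indv G X v | v. v \<in> verts G}"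
        using Wp_FG'[OF Pe(1)] by blast
      show ?thesis
      proof (cases "n = 0")
        case True
        have "indv G X v \<eta> = (1::'k)" using eb es by (simp add: indv_def Uv_def)
        define a :: "_ \<Rightarrow> 'k" where "a = (\<lambda>x. indv G X v x - ind G X (Wp (pre \<eta> (Suc n))) x)"
        have "(indv G X v :: _ \<Rightarrow> 'k) \<noteq> ind G X (Wp (pre \<eta> (Suc n)))"
        proof
          assume "(indv G X v :: _ \<Rightarrow> 'k) = ind G X (Wp (pre \<eta> (Suc n)))"
          then have "(indv G X v \<zeta> :: 'k) = ind G X (Wp (pre \<eta> (Suc n))) \<zeta>" by simp
          then show False using iv a2 by simp
        qed
        then have "a \<in> D0 G X" unfolding a_def using D2 v by (intro D0_diff) blast+
        moreover have "a \<zeta> = 1" "a \<eta> = 0" unfolding a_def using iv a2 a2' \<open>indv G X v \<eta> = 1\<close> by simp_all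
        ultimately show ?thesis by blast
      next
        case False
        note Pz = pre_ok[OF z, of n]
        have zn1: "nth_edge \<zeta> (n - 1) \<noteq> None" using zb False by simp
        have Pz: "is_fpath G (pre \<zeta> n)" "has_prefix (pre \<zeta> n) \<zeta>" using Pz False zn1 by auto
        have "has_prefix (pre \<zeta> n) \<eta>" using agr[of n] False zn1 by simp
        have a1: "ind G X (Wp (pre \<zeta> n)) \<zeta> = (1::'k)" using Pz z by (simp add: ind_def U_Wp)
        have a1': "ind G X (Wp (pre \<zeta> n)) \<eta> = (1::'k)" using Pz eb \<open>has_prefix (pre \<zeta> n) \<eta>\<close> by (simp add: ind_def U_Wp)
        have D1: "ind G X (Wp (pre \<zeta> n)) \<in> {ind G X p | p. p \<in> FG G \<and> p \<noteq> []} \<union> {indv G X v | v. v \<in> verts G}"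
          using Wp_FG'[OF Pz(1)] by blast
        define a :: "_ \<Rightarrow> 'k" where "a = (\<lambda>x. ind G X (Wp (pre \<zeta> n)) x - ind G X (Wp (pre \<eta> (Suc n))) x)"
        have "(ind G X (Wp (pre \<zeta> n)) :: _ \<Rightarrow> 'k) \<noteq> ind G X (Wp (pre \<eta> (Suc n)))"
        proof
          assume "(ind G X (Wp (pre \<zeta> n)) :: _ \<Rightarrow> 'k) = ind G X (Wp (pre \<eta> (Suc n)))"
          then have "(ind G X (Wp (pre \<zeta> n)) \<zeta> :: 'k) = ind G X (Wp (pre \<eta> (Suc n))) \<zeta>" by simp
          then show False using a1 a2 by simp
        qed
        then have "a \<in> D0 G X" unfolding a_def using D1 D2 by (intro D0_diff) blast+
        moreover have "a \<zeta> = 1" "a \<eta> = 0" unfolding a_def using a1 a1' a2 a2' by simp_all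
        ultimately show ?thesis by blast
      qed
    qed
  qed
qed


lemma close_mono: "close G N' \<zeta> \<xi> \<Longrightarrow> N \<le> N' \<Longrightarrow> close G N \<zeta> \<xi>"
  unfolding close_def by auto

lemma core:
  fixes G :: "('v, 'e) graph"
  assumes wf: "wf_graph G" and L: "rel_condition_L G X" and U: "\<xi> \<in> U G X t" and t: "t \<noteq> []"
    and N: "length (pos_part t) + length (neg_part t) \<le> N"
  shows "\<exists>\<zeta>\<in>bdry G X. close G N \<zeta> \<xi> \<and> theta G (finv t) \<zeta> \<noteq> \<zeta>"
proof (cases "theta G (finv t) \<xi> = \<xi>")
  case False
  then show ?thesis using U_sub[OF U] close_refl by blast
next
  case True
  obtain f where f: "\<xi> = BI f" "length (pos_part t) \<noteq> length (neg_part t)"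
    "\<forall>i. f i = (if i < length (neg_part t) then neg_part t ! i
                 else f (i - length (neg_part t) + length (pos_part t)))"
    using fix_inf[OF U t True] by blast
  have ip: "is_ipath G f" using U_sub[OF U] f(1) by (simp add: bdry_BI)
  obtain m d where md: "0 < d" "\<forall>i\<ge>m. f (i + d) = f i" using fix_periodic[OF f(3) f(2)] by blast
  obtain \<zeta> where z: "\<zeta> \<in> bdry G X" "\<zeta> \<noteq> BI f" "close G N \<zeta> (BI f)"
    using perturb[OF wf L ip md] by blast
  have "theta G (finv t) \<zeta> \<noteq> \<zeta>"
  proof
    assume fz: "theta G (finv t) \<zeta> = \<zeta>"
    have "\<zeta> \<in> U G X t" using U_close[OF z(1) U_sub[OF U] z(3)[folded f(1)]] U N by simp
    then obtain g where g: "\<zeta> = BI g"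
      "\<forall>i. g i = (if i < length (neg_part t) then neg_part t ! i
                 else g (i - length (neg_part t) + length (pos_part t)))"
      using fix_inf[OF _ t fz] by blast
    have "\<forall>i<N. g i = f i" using z(3) g(1) unfolding close_def by simp
    then have "g = f" using fix_unique[OF g(2) f(3) _ _ N] f(2) by simp
    then show False using z(2) g(1) by simp
  qed
  then show ?thesis using z f(1) by blast
qed

lemma Dp_const:
  fixes h :: "('v, 'e) bpath \<Rightarrow> 'k::field"
  assumes t: "t \<noteq> []" and h: "h \<in> Dp G X t"
  shows "\<exists>N. \<forall>\<zeta> \<xi>. \<zeta> \<in> bdry G X \<longrightarrow> \<xi> \<in> bdry G X \<longrightarrow> close G N \<zeta> \<xi> \<longrightarrow> h \<zeta> = h \<xi>"
    and "h \<xi> \<noteq> 0 \<Longrightarrow> \<xi> \<in> U G X t"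
proof -
  have "h \<in> lspan {(\<lambda>\<xi>. ind G X t \<xi> * ind G X q \<xi>) | q. q \<in> FG G}" using h t by (simp add: Dp_def)
  then obtain T c where T: "finite T" "T \<subseteq> {(\<lambda>\<xi>. ind G X t \<xi> * ind G X q \<xi>) | q. q \<in> FG G}"
    and hT: "h = (\<lambda>x. \<Sum>g\<in>T. c g * g x)" unfolding lspan_def by blast
  have "\<forall>g\<in>T. \<exists>q. g = (\<lambda>\<xi>. ind G X t \<xi> * ind G X q \<xi>)" using T(2) by blast
  then obtain qf where qf: "\<And>g. g \<in> T \<Longrightarrow> g = (\<lambda>\<xi>. ind G X t \<xi> * ind G X (qf g) \<xi>)" by metis
  define N where "N = length (pos_part t) + (\<Sum>g\<in>T. length (pos_part (qf g)))"
  show "\<exists>N. \<forall>\<zeta> \<xi>. \<zeta> \<in> bdry G X \<longrightarrow> \<xi> \<in> bdry G X \<longrightarrow> close G N \<zeta> \<xi> \<longrightarrow> h \<zeta> = h \<xi>"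
  proof (intro exI[of _ N] allI impI)
    fix \<zeta> \<xi> assume a: "\<zeta> \<in> bdry G X" "\<xi> \<in> bdry G X" "close G N \<zeta> \<xi>"
    have "\<And>g. g \<in> T \<Longrightarrow> g \<zeta> = g \<xi>"
    proof -
      fix g assume g: "g \<in> T"
      have "length (pos_part (qf g)) \<le> (\<Sum>g\<in>T. length (pos_part (qf g)))"
        by (rule member_le_sum) (use g T(1) in auto)
      then have l1: "length (pos_part (qf g)) \<le> N" unfolding N_def by simp
      have l2: "length (pos_part t) \<le> N" unfolding N_def by simp
      have "ind G X t \<zeta> = (ind G X t \<xi> :: 'k)" by (rule ind_close[OF a l2])
      moreover have "ind G X (qf g) \<zeta> = (ind G X (qf g) \<xi> :: 'k)" by (rule ind_close[OF a l1])
      ultimately show "g \<zeta> = g \<xi>" by (subst (1 2) qf[OF g]) simp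
    qed
    then show "h \<zeta> = h \<xi>" unfolding hT by (intro sum.cong) simp_all
  qed
  assume hx: "h \<xi> \<noteq> 0"
  show "\<xi> \<in> U G X t"
  proof (rule ccontr)
    assume "\<xi> \<notin> U G X t"
    then have "\<And>g. g \<in> T \<Longrightarrow> g \<xi> = 0" by (subst qf) (auto simp: ind_def)
    then have "h \<xi> = 0" unfolding hT by (intro sum.neutral) simp
    then show False using hx by simp
  qed
qed


section \<open>Products in the crossed product\<close>

lemma FG_Nil: "[] \<in> FG G" by (simp add: FG_def reduced_def)

lemma pn_Nil[simp]: "pos_part [] = []" "neg_part [] = []" "is_ab_inv []"
  by (simp_all add: pos_part_def neg_part_def is_ab_inv_def)

lemma U_Nil: "U G X [] = bdry G X" by (simp add: U_def)

lemma finv_Nil[simp]: "finv [] = []" by (simp add: finv_def)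

lemma theta_Nil: "\<xi> \<in> bdry G X \<Longrightarrow> theta G [] \<xi> = \<xi>"
  by (cases \<xi>) (auto simp: theta_def bdry_BF dest: fpath_ne)

lemma alpha_Nil: "alpha G X [] f \<xi> = (if \<xi> \<in> bdry G X then f \<xi> else 0)"
  by (simp add: alpha_def U_Nil theta_Nil)

lemma CP_FG:
  assumes "x \<in> CP G X" "x t \<noteq> (\<lambda>_. 0)" shows "t \<in> FG G"
proof (rule ccontr)
  assume "t \<notin> FG G"
  moreover have "if t \<in> FG G then x t \<in> Dp G X t else x t = (\<lambda>_. 0)" using assms(1) by (simp add: CP_def)
  ultimately have "x t = (\<lambda>_. 0)" by simp
  then show False using assms(2) by simp
qed

lemma CP_fin: "x \<in> CP G X \<Longrightarrow> finite {t. x t \<noteq> (\<lambda>_. 0)}" by (simp add: CP_def)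

lemma cp_left:
  assumes x: "x \<in> CP G X" and a: "a \<noteq> (\<lambda>_. 0)"
  shows "cp_mult G X x (delta0 a) g \<xi> = (if x g \<noteq> (\<lambda>_. 0) then alpha G X g (\<lambda>\<zeta>. alpha G X (finv g) (x g) \<zeta> * a \<zeta>) \<xi> else 0)"
proof -
  have s: "{u. delta0 a u \<noteq> (\<lambda>_. 0)} = {[]}" using a by (auto simp: delta0_def)
  have "cp_mult G X x (delta0 a) g \<xi> = (\<Sum>t\<in>{t. x t \<noteq> (\<lambda>_. 0)}. if t = g then alpha G X t (\<lambda>\<zeta>. alpha G X (finv t) (x t) \<zeta> * a \<zeta>) \<xi> else 0)"
    unfolding cp_mult_def s
  proof (intro sum.cong refl)
    fix t assume "t \<in> {t. x t \<noteq> (\<lambda>_. 0)}"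
    then have "fmul t [] = t" using CP_FG[OF x] fmul_Nil_r by blast
    then show "(\<Sum>u\<in>{[]}. if fmul t u = g then alpha G X t (\<lambda>\<zeta>. alpha G X (finv t) (x t) \<zeta> * delta0 a u \<zeta>) \<xi> else 0) =
      (if t = g then alpha G X t (\<lambda>\<zeta>. alpha G X (finv t) (x t) \<zeta> * a \<zeta>) \<xi> else 0)"
      by (simp add: delta0_def)
  qed
  also have "\<dots> = (if g \<in> {t. x t \<noteq> (\<lambda>_. 0)} then alpha G X g (\<lambda>\<zeta>. alpha G X (finv g) (x g) \<zeta> * a \<zeta>) \<xi> else 0)"
    by (rule sum.delta[OF CP_fin[OF x]])
  finally show ?thesis by simp
qed

lemma cp_right:
  assumes x: "x \<in> CP G X" and a: "a \<noteq> (\<lambda>_. 0)"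
  shows "cp_mult G X (delta0 a) x g \<xi> = (if \<xi> \<in> bdry G X then a \<xi> * x g \<xi> else 0)"
proof -
  have s: "{u. delta0 a u \<noteq> (\<lambda>_. 0)} = {[]}" using a by (auto simp: delta0_def)
  have "cp_mult G X (delta0 a) x g \<xi> = (\<Sum>u\<in>{t. x t \<noteq> (\<lambda>_. 0)}. if fmul [] u = g then alpha G X [] (\<lambda>\<zeta>. alpha G X (finv []) (delta0 a []) \<zeta> * x u \<zeta>) \<xi> else 0)"
    unfolding cp_mult_def s by simp
  also have "\<dots> = (\<Sum>u\<in>{t. x t \<noteq> (\<lambda>_. 0)}. if u = g then alpha G X [] (\<lambda>\<zeta>. alpha G X [] a \<zeta> * x u \<zeta>) \<xi> else 0)"
  proof (intro sum.cong refl)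
    fix u assume "u \<in> {t. x t \<noteq> (\<lambda>_. 0)}"
    then have "fmul [] u = u" using CP_FG[OF x] fmul_Nil_l by blast
    then show "(if fmul [] u = g then alpha G X [] (\<lambda>\<zeta>. alpha G X (finv []) (delta0 a []) \<zeta> * x u \<zeta>) \<xi> else 0) =
      (if u = g then alpha G X [] (\<lambda>\<zeta>. alpha G X [] a \<zeta> * x u \<zeta>) \<xi> else 0)"
      by (simp add: delta0_def)
  qed
  also have "\<dots> = (if g \<in> {t. x t \<noteq> (\<lambda>_. 0)} then alpha G X [] (\<lambda>\<zeta>. alpha G X [] a \<zeta> * x g \<zeta>) \<xi> else 0)"
    by (rule sum.delta[OF CP_fin[OF x]])
  finally show ?thesis by (auto simp: alpha_Nil)
qed


section \<open>Relative Condition (L) implies maximal commutativity\<close>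

lemma dir1:
  fixes G :: "('v, 'e) graph" and x :: "'e fword \<Rightarrow> ('v, 'e) bpath \<Rightarrow> 'k::field"
  assumes wf: "wf_graph G" and L: "rel_condition_L G X" and x: "x \<in> CP G X"
    and comm: "\<forall>a\<in>D0 G X. cp_mult G X x (delta0 a) = cp_mult G X (delta0 a) x"
  shows "\<exists>a\<in>D0 G X. x = delta0 a"
proof -
  have cpx: "\<And>t. if t \<in> FG G then x t \<in> Dp G X t else x t = (\<lambda>_. 0)" using x by (simp add: CP_def)
  have x0: "x [] \<in> D0 G X" using cpx[of "[]"] FG_Nil[of G] by (simp add: Dp_def)
  have zero: "x t = (\<lambda>_. 0)" if t: "t \<noteq> []" for t
  proof (rule ccontr)
    assume nz: "x t \<noteq> (\<lambda>_. 0)"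
    have tFG: "t \<in> FG G" by (rule CP_FG[OF x nz])
    have xt: "x t \<in> Dp G X t" using cpx[of t] tFG by simp
    obtain N where N: "\<forall>\<zeta> \<xi>. \<zeta> \<in> bdry G X \<longrightarrow> \<xi> \<in> bdry G X \<longrightarrow> close G N \<zeta> \<xi> \<longrightarrow> x t \<zeta> = x t \<xi>"
      using Dp_const(1)[OF t xt] by blast
    obtain \<xi> where xi: "x t \<xi> \<noteq> 0"
    proof -
      have "\<exists>\<xi>. x t \<xi> \<noteq> 0"
      proof (rule ccontr)
        assume "\<not> (\<exists>\<xi>. x t \<xi> \<noteq> 0)"
        then have "x t = (\<lambda>_. 0)" by auto
        then show False using nz by simp
      qed
      then show ?thesis using that by blast
    qed
    have xiU: "\<xi> \<in> U G X t" using Dp_const(2)[OF t xt xi] .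
    define N' where "N' = N + length (pos_part t) + length (neg_part t)"
    obtain \<zeta> where z: "\<zeta> \<in> bdry G X" "close G N' \<zeta> \<xi>" "theta G (finv t) \<zeta> \<noteq> \<zeta>"
      using core[OF wf L xiU t, of N'] unfolding N'_def by auto
    have "close G N \<zeta> \<xi>" using close_mono[OF z(2)] unfolding N'_def by simp
    then have xz: "x t \<zeta> = x t \<xi>" using N z(1) U_sub[OF xiU] by blast
    obtain a where a: "a \<in> D0 G X" "a \<zeta> = (1::'k)" "a (theta G (finv t) \<zeta>) = 0"
      using separate[OF wf z(1), of "theta G (finv t) \<zeta>"] z(3) by metis
    have an: "a \<noteq> (\<lambda>_. 0)" using a(2) by (metis zero_neq_one)
    have "cp_mult G X x (delta0 a) t \<zeta> = cp_mult G X (delta0 a) x t \<zeta>" using comm a(1) by simp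
    moreover have "cp_mult G X x (delta0 a) t \<zeta> = 0"
      unfolding cp_left[OF x an] using nz a(3) by (simp add: alpha_def)
    moreover have "cp_mult G X (delta0 a) x t \<zeta> = x t \<xi>"
      unfolding cp_right[OF x an] using z(1) a(2) xz by simp
    ultimately show False using xi by simp
  qed
  have "x = delta0 (x [])"
  proof
    fix t show "x t = delta0 (x []) t" using zero[of t] by (cases "t = []") (simp_all add: delta0_def)
  qed
  then show ?thesis using x0 by blast
qed


section \<open>Failure of Relative Condition (L)\<close>

lemma cycle_succ:
  assumes c: "is_cycle G cs"
  shows "rng G (cs ! (j mod length cs)) = src G (cs ! (Suc j mod length cs))"
proof -
  define n where "n = length cs"
  have ne: "cs \<noteq> []" using c by (simp add: is_cycle_def is_fpath_def)
  then have n0: "0 < n" unfolding n_def by simp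
  have jm: "j mod n < n" using n0 by simp
  show ?thesis
  proof (cases "Suc (j mod n) < n")
    case True
    have "Suc j mod n = Suc (j mod n)" using True by (simp add: mod_Suc)
    then show ?thesis using c True unfolding is_cycle_def is_fpath_def n_def by simp
  next
    case False
    then have jn: "j mod n = n - 1" using jm by simp
    have "Suc j mod n = 0" using False jm by (simp add: mod_Suc)
    moreover have "cs ! (n - 1) = last cs" using ne unfolding n_def by (simp add: last_conv_nth)
    moreover have "cs ! 0 = hd cs" using ne by (simp add: hd_conv_nth)
    ultimately show ?thesis using c jn unfolding is_cycle_def n_def by simp
  qed
qed

lemma dir2:
  fixes G :: "('v, 'e) graph"
  assumes wf: "wf_graph G" and nL: "\<not> rel_condition_L G X"
  shows "\<exists>x\<in>(CP G X :: ('e fword \<Rightarrow> ('v, 'e) bpath \<Rightarrow> 'k::field) set).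
           (\<forall>a\<in>D0 G X. cp_mult G X x (delta0 a) = cp_mult G X (delta0 a) x) \<and> \<not> (\<exists>a\<in>D0 G X. x = delta0 a)"
proof -
  obtain cs where cyc: "is_cycle G cs" and notY: "\<forall>i<length cs. src G (cs ! i) \<notin> Reg G - X"
    and nex: "\<not> has_exit G cs"
    using nL unfolding rel_condition_L_def by blast
  define n where "n = length cs"
  have fp: "is_fpath G cs" using cyc by (simp add: is_cycle_def)
  have ne: "cs \<noteq> []" using fpath_ne[OF fp] .
  have n0: "0 < n" using ne unfolding n_def by simp
  have cse: "\<And>i. i < n \<Longrightarrow> cs ! i \<in> edges G" using fp unfolding is_fpath_def n_def by auto
  have succ: "\<And>j. rng G (cs ! (j mod n)) = src G (cs ! (Suc j mod n))"
    using cycle_succ[OF cyc] unfolding n_def by blast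
  have noexit: "\<And>e i. e \<in> edges G \<Longrightarrow> i < n \<Longrightarrow> src G e = src G (cs ! i) \<Longrightarrow> e = cs ! i"
    using nex unfolding has_exit_def n_def by blast
  define P :: "('v, 'e) bpath" where "P = BI (\<lambda>i. cs ! (i mod n))"
  have Pb: "P \<in> bdry G X"
    unfolding P_def bdry_BI is_ipath_def
  proof (intro allI conjI)
    fix i
    show "cs ! (i mod n) \<in> edges G" using cse n0 by simp
    show "rng G (cs ! (i mod n)) = src G (cs ! (Suc i mod n))" by (rule succ)
  qed
  have Pp: "has_prefix cs P" unfolding P_def n_def by simp
  have uniq: "\<xi> = P" if xb: "\<xi> \<in> bdry G X" and xp: "has_prefix cs \<xi>" for \<xi>
  proof -
    have all: "nth_edge \<xi> i = Some (cs ! (i mod n))" for i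
    proof (induction i)
      case 0
      then show ?case using xp n0 unfolding has_prefix_nth n_def by simp
    next
      case (Suc j)
      define k where "k = Suc j mod n"
      have k: "k < n" unfolding k_def using n0 by simp
      have v: "rng G (cs ! (j mod n)) = src G (cs ! k)" unfolding k_def by (rule succ)
      show ?case
      proof (cases "nth_edge \<xi> (Suc j)")
        case None
        have st: "is_sink G (src G (cs ! k)) \<or> src G (cs ! k) \<in> Reg G - X"
          using E5[OF xb Suc None] v by simp
        have ns: "\<not> is_sink G (src G (cs ! k))" using cse[OF k] by (auto simp: is_sink_def)
        have "{e \<in> edges G. src G e = src G (cs ! k)} = {cs ! k}" using noexit[OF _ k] cse[OF k] by auto
        moreover have "src G (cs ! k) \<in> verts G" using wf cse[OF k] by (simp add: wf_graph_def)
        ultimately have "src G (cs ! k) \<in> Reg G" using cse[OF k] by (auto simp: Reg_def is_regular_def)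
        moreover have "src G (cs ! k) \<notin> Reg G - X" using notY k unfolding n_def by blast
        ultimately show ?thesis using st ns by blast
      next
        case (Some e)
        have "e \<in> edges G" using E1[OF xb Some] .
        moreover have "rng G (cs ! (j mod n)) = src G e" using E2[OF xb Suc Some] .
        ultimately have "e = cs ! k" using noexit[OF _ k] v by simp
        then show ?thesis using Some unfolding k_def by simp
      qed
    qed
    show ?thesis
    proof (cases \<xi>)
      case (BV v) then show ?thesis using all[of 0] by simp
    next
      case (BF es) then show ?thesis using all[of "length es"] by simp
    next
      case (BI g)
      then have "g = (\<lambda>i. cs ! (i mod n))" using all by auto
      then show ?thesis using BI P_def by simp
    qed
  qed
  define c where "c = Wp cs"
  have cFG: "c \<in> FG G" "c \<noteq> []" using Wp_FG'[OF fp] c_def by auto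
  have Uc: "U G X c = {P}" unfolding c_def U_Wp[OF fp]
  proof
    show "{\<xi> \<in> bdry G X. has_prefix cs \<xi>} \<subseteq> {P}"
    proof
      fix \<xi> assume "\<xi> \<in> {\<xi> \<in> bdry G X. has_prefix cs \<xi>}"
      then have "\<xi> = P" using uniq by blast
      then show "\<xi> \<in> {P}" by simp
    qed
    show "{P} \<subseteq> {\<xi> \<in> bdry G X. has_prefix cs \<xi>}" using Pb Pp by simp
  qed
  have indc: "\<And>\<xi>. ind G X c \<xi> = (if \<xi> = P then 1 else (0::'k))" unfolding ind_def Uc by simp
  have abc: "is_ab_inv c" "pos_part c = cs" "neg_part c = []" unfolding c_def by simp_all
  have fc: "finv c = Wp [] @ Wn cs" using finv_WW[of cs "[]"] unfolding c_def by simp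
  have ffc: "finv (finv c) = c"
  proof -
    have "finv (finv c) = finv (Wp [] @ Wn cs)" by (simp only: fc)
    also have "\<dots> = Wp cs @ Wn []" by (rule finv_WW)
    also have "\<dots> = c" unfolding c_def by simp
    finally show ?thesis .
  qed
  have Ufc: "U G X (finv c) = {\<xi> \<in> bdry G X. bsrc G \<xi> = rng G (last cs)}"
    unfolding fc U_def Let_def using ne fp by simp
  have bsP: "bsrc G P = rng G (last cs)"
    using cyc ne unfolding P_def is_cycle_def by (simp add: hd_conv_nth)
  have th1: "theta G (finv c) P = P"
  proof -
    have "theta G (finv c) P = prepend [] (drop_pre G n P)" unfolding theta_finv[OF abc(1)] abc n_def ..
    also have "\<dots> = BI (\<lambda>i. cs ! ((i + n) mod n))" unfolding P_def by simp
    also have "\<dots> = P" unfolding P_def by simp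
    finally show ?thesis .
  qed
  have th2: "theta G c P = P"
  proof -
    have "theta G c P = prepend cs P" unfolding theta_def abc by (simp add: P_def)
    also have "\<dots> = BI (\<lambda>i. if i < n then cs ! i else cs ! ((i - n) mod n))" unfolding P_def n_def by simp
    also have "(\<lambda>i. if i < n then cs ! i else cs ! ((i - n) mod n)) = (\<lambda>i. cs ! (i mod n))"
    proof
      fix i show "(if i < n then cs ! i else cs ! ((i - n) mod n)) = cs ! (i mod n)"
        by (cases "i < n") (simp_all add: le_mod_geq)
    qed
    finally show ?thesis unfolding P_def .
  qed
  define x :: "'e fword \<Rightarrow> ('v, 'e) bpath \<Rightarrow> 'k" where "x = (\<lambda>t. if t = c then ind G X c else (\<lambda>_. 0))"
  have indc_ne: "ind G X c \<noteq> (\<lambda>_. 0::'k)"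
  proof
    assume "ind G X c = (\<lambda>_. 0::'k)"
    then have "ind G X c P = (0::'k)" by simp
    then show False using indc by simp
  qed
  have xCP: "x \<in> CP G X"
    unfolding CP_def
  proof (intro CollectI conjI allI)
    fix t
    show "if t \<in> FG G then x t \<in> Dp G X t else x t = (\<lambda>_. 0)"
    proof (cases "t = c")
      case True
      have "(ind G X c :: _ \<Rightarrow> 'k) = (\<lambda>\<xi>. ind G X c \<xi> * ind G X [] \<xi>)"
      proof
        fix \<xi> show "ind G X c \<xi> = (ind G X c \<xi> * ind G X [] \<xi> :: 'k)"
          using U_sub[of \<xi> G X c] by (simp add: ind_def U_Nil)
      qed
      then have "(ind G X c :: _ \<Rightarrow> 'k) \<in> lspan {(\<lambda>\<xi>. ind G X c \<xi> * ind G X q \<xi>) | q. q \<in> FG G}"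
        by (intro lspan_single CollectI exI[of _ "[]"] conjI) (assumption, rule FG_Nil)
      then show ?thesis using True cFG unfolding x_def by (simp add: Dp_def)
    next
      case False
      then show ?thesis unfolding x_def by (simp add: Dp_def D0_def lspan_zero)
    qed
  next
    have "{t. x t \<noteq> (\<lambda>_. 0)} \<subseteq> {c}" unfolding x_def by auto
    then show "finite {t. x t \<noteq> (\<lambda>_. 0)}" by (rule finite_subset) simp
  qed
  have comm: "cp_mult G X x (delta0 a) = cp_mult G X (delta0 a) x" if aD: "a \<in> D0 G X" for a
  proof (cases "a = (\<lambda>_. 0)")
    case True
    have "{u. delta0 a u \<noteq> (\<lambda>_. 0)} = {}" using True by (auto simp: delta0_def)
    then show ?thesis unfolding cp_mult_def by simp
  next
    case False
    show ?thesis
    proof (intro ext)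
      fix g \<xi>
      show "cp_mult G X x (delta0 a) g \<xi> = cp_mult G X (delta0 a) x g \<xi>"
        unfolding cp_left[OF xCP False] cp_right[OF xCP False]
      proof (cases "g = c")
        case False
        then show "(if x g \<noteq> (\<lambda>_. 0) then alpha G X g (\<lambda>\<zeta>. alpha G X (finv g) (x g) \<zeta> * a \<zeta>) \<xi> else 0) =
          (if \<xi> \<in> bdry G X then a \<xi> * x g \<xi> else 0)" unfolding x_def by simp
      next
        case True
        have l: "alpha G X c (\<lambda>\<zeta>. alpha G X (finv c) (ind G X c) \<zeta> * a \<zeta>) \<xi> = (if \<xi> = P then a P else 0)"
        proof (cases "\<xi> = P")
          case True
          have "alpha G X (finv c) (ind G X c) P = (1::'k)"
            unfolding alpha_def ffc th1 Ufc using Pb bsP th2 indc by simp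
          then show ?thesis unfolding alpha_def[of G X c] Uc using True th1 by simp
        next
          case False
          then show ?thesis unfolding alpha_def[of G X c] Uc by simp
        qed
        have xc: "x c = ind G X c" unfolding x_def by simp
        have r: "(if \<xi> \<in> bdry G X then a \<xi> * ind G X c \<xi> else 0) = (if \<xi> = P then a P else 0)"
          using Pb by (simp add: indc)
        show "(if x g \<noteq> (\<lambda>_. 0) then alpha G X g (\<lambda>\<zeta>. alpha G X (finv g) (x g) \<zeta> * a \<zeta>) \<xi> else 0) =
          (if \<xi> \<in> bdry G X then a \<xi> * x g \<xi> else 0)"
          unfolding True xc by (simp only: l r indc_ne not_False_eq_True if_True)
      qed
    qed
  qed
  have nd: "\<not> (\<exists>a\<in>D0 G X. x = delta0 a)"
  proof
    assume "\<exists>a\<in>D0 G X. x = delta0 a"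
    then obtain a where "x = delta0 a" by blast
    then have "x c = delta0 a c" by simp
    then have "ind G X c = (\<lambda>_. 0::'k)" using cFG(2) unfolding x_def delta0_def by simp
    then show False using indc_ne by simp
  qed
  show ?thesis using xCP comm nd by blast
qed

theorem mainTheorem8:
  fixes G :: "('v, 'e) graph" and X :: "'v set"
  assumes "wf_graph G" and "X \<subseteq> Reg G"
  shows "(\<forall>x \<in> (CP G X :: ('e fword \<Rightarrow> ('v, 'e) bpath \<Rightarrow> 'k::field) set).
             (\<forall>a \<in> D0 G X. cp_mult G X x (delta0 a) = cp_mult G X (delta0 a) x)
             \<longrightarrow> (\<exists>a \<in> D0 G X. x = delta0 a))
         \<longleftrightarrow> rel_condition_L G X"
proof
  assume h: "\<forall>x \<in> (CP G X :: ('e fword \<Rightarrow> ('v, 'e) bpath \<Rightarrow> 'k::field) set).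
             (\<forall>a \<in> D0 G X. cp_mult G X x (delta0 a) = cp_mult G X (delta0 a) x)
             \<longrightarrow> (\<exists>a \<in> D0 G X. x = delta0 a)"
  show "rel_condition_L G X"
  proof (rule ccontr)
    assume "\<not> rel_condition_L G X"
    then obtain x where "x \<in> (CP G X :: ('e fword \<Rightarrow> ('v, 'e) bpath \<Rightarrow> 'k::field) set)"
      "\<forall>a\<in>D0 G X. cp_mult G X x (delta0 a) = cp_mult G X (delta0 a) x" "\<not> (\<exists>a\<in>D0 G X. x = delta0 a)"
      using dir2[OF assms(1)] by blast
    then show False using h by blast
  qed
next
  assume "rel_condition_L G X"
  then show "\<forall>x \<in> (CP G X :: ('e fword \<Rightarrow> ('v, 'e) bpath \<Rightarrow> 'k::field) set).
             (\<forall>a \<in> D0 G X. cp_mult G X x (delta0 a) = cp_mult G X (delta0 a) x)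
             \<longrightarrow> (\<exists>a \<in> D0 G X. x = delta0 a)"
    using dir1[OF assms(1)] by blast
qed

end
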